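(* Let $r\ge1$, $n$ be integers and let $\sigma,\sigma':\mathbb{Z}_n\to\{0,1\}$ satisfy $\mathrm{maj}_r(\sigma)=\sigma'$. For every block $[i,j]\in B(\sigma')$, the number of blocks in the block interval $[f^{\leftarrow}_{\sigma,\sigma'}([i,j]),f^{\rightarrow}_{\sigma,\sigma'}([i,j])]_{B(\sigma)}$ is odd.
   Context: Cells are elements of $\mathbb{Z}_n$, arithmetic mod $n$; $[a,b]$ denotes the cyclic interval $a,\dots,b$. The majority rule with radius $r$: $\mathrm{maj}_r(\sigma)(i)=0$ if among the cells of $[i-r,i+r]$ strictly more have value $0$ than $1$ under $\sigma$, and $=1$ otherwise. For $\beta\in\{0,1\}$, $B^\beta(\sigma)$ is the set of cell intervals $[i,j]$ with $\sigma(k)=\beta$ for all $k\in[i,j]$ and $\sigma(i-1)=\sigma(j+1)=1-\beta$ (maximal homogeneous blocks); $B(\sigma)=B^0(\sigma)\cup B^1(\sigma)$. For $[i,j]\in B(\sigma')$: the left mapping $f^{\leftarrow}_{\sigma,\sigma'}([i,j])$ is the block of $B(\sigma)$ containing cell $j-r$, and the right mapping $f^{\rightarrow}_{\sigma,\sigma'}([i,j])$ is the block of $B(\sigma)$ containing cell $i+r$. For blocks $X=[x,y]$, $X'=[x',y']$ and a set of blocks $B$, the block interval $[X,X']_B$ is the set of blocks $[i,j]\in B$ with $[i,j]\subseteq[x,y']$. *)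

theory Defs
  imports Main
begin

text \<open>Cells are the integers 0..n-1 (representing Z_n); every cell index is reduced mod n.
  Configurations are functions int => nat; only their values on 0..n-1 matter.\<close>

definition cells :: "int \<Rightarrow> int set" where
  "cells n = {0..<n}"

definition cint :: "int \<Rightarrow> int \<Rightarrow> int \<Rightarrow> int set" where
  "cint n a b = {(a + t) mod n | t. 0 \<le> t \<and> t \<le> (b - a) mod n}"

definition maj :: "int \<Rightarrow> nat \<Rightarrow> (int \<Rightarrow> nat) \<Rightarrow> int \<Rightarrow> nat" where
  "maj n r \<sigma> i =
     (if card {k \<in> cint n (i - int r) (i + int r). \<sigma> k = 0}
           > card {k \<in> cint n (i - int r) (i + int r). \<sigma> k = 1}
      then 0 else 1)"

definition blocks_of :: "int \<Rightarrow> nat \<Rightarrow> (int \<Rightarrow> nat) \<Rightarrow> (int \<times> int) set" where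
  "blocks_of n \<beta> \<sigma> = {(i, j). i \<in> cells n \<and> j \<in> cells n \<and>
      (\<forall>k \<in> cint n i j. \<sigma> k = \<beta>) \<and>
      \<sigma> ((i - 1) mod n) = 1 - \<beta> \<and> \<sigma> ((j + 1) mod n) = 1 - \<beta>}"

definition blocks :: "int \<Rightarrow> (int \<Rightarrow> nat) \<Rightarrow> (int \<times> int) set" where
  "blocks n \<sigma> = blocks_of n 0 \<sigma> \<union> blocks_of n 1 \<sigma>"

definition block_containing :: "int \<Rightarrow> (int \<Rightarrow> nat) \<Rightarrow> int \<Rightarrow> int \<times> int" where
  "block_containing n \<sigma> c = (THE X. X \<in> blocks n \<sigma> \<and> c mod n \<in> cint n (fst X) (snd X))"

definition left_map :: "int \<Rightarrow> nat \<Rightarrow> (int \<Rightarrow> nat) \<Rightarrow> int \<times> int \<Rightarrow> int \<times> int" where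
  "left_map n r \<sigma> B = block_containing n \<sigma> (snd B - int r)"

definition right_map :: "int \<Rightarrow> nat \<Rightarrow> (int \<Rightarrow> nat) \<Rightarrow> int \<times> int \<Rightarrow> int \<times> int" where
  "right_map n r \<sigma> B = block_containing n \<sigma> (fst B + int r)"

definition block_interval :: "int \<Rightarrow> int \<times> int \<Rightarrow> int \<times> int \<Rightarrow> (int \<times> int) set \<Rightarrow> (int \<times> int) set" where
  "block_interval n X X' B = {Y \<in> B. cint n (fst Y) (snd Y) \<subseteq> cint n (fst X) (snd X')}"

end

theory Submission
  imports Defs
begin

lemma mod_off: "(0::int) \<le> t \<Longrightarrow> t < n \<Longrightarrow> ((a + t) mod n - a) mod n = t"
  by (simp add: mod_diff_left_eq)

lemma cint_char:
  assumes "n \<ge> 1"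
  shows "cint n a b = {c. 0 \<le> c \<and> c < n \<and> (c - a) mod n \<le> (b - a) mod n}"
proof (rule set_eqI, rule iffI)
  fix c assume "c \<in> cint n a b"
  then obtain t where t: "c = (a+t) mod n" "0 \<le> t" "t \<le> (b-a) mod n" unfolding cint_def by auto
  have "t < n" using t(3) assms by (smt (verit) pos_mod_bound)
  then have "(c - a) mod n = t" using t mod_off by simp
  then show "c \<in> {c. 0 \<le> c \<and> c < n \<and> (c - a) mod n \<le> (b - a) mod n}" using t assms by simp
next
  fix c assume c: "c \<in> {c. 0 \<le> c \<and> c < n \<and> (c - a) mod n \<le> (b - a) mod n}"
  have "(a + (c-a) mod n) mod n = c" using c by (simp add: mod_add_right_eq)
  moreover have "0 \<le> (c-a) mod n" using assms by simp
  ultimately have "c = (a + (c-a) mod n) mod n \<and> 0 \<le> (c-a) mod n \<and> (c-a) mod n \<le> (b - a) mod n" using c by simp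
  then show "c \<in> cint n a b" unfolding cint_def by blast
qed


definition M :: "(int \<Rightarrow> nat) \<Rightarrow> int set \<Rightarrow> nat" where
  "M \<sigma> W = (if card {k \<in> W. \<sigma> k = 0} > card {k \<in> W. \<sigma> k = 1} then 0 else 1)"

lemma card_swap:
  assumes "finite W" "a \<in> W" "b \<notin> W"
  shows "card {k \<in> insert b (W - {a}). P k} = card {k \<in> W. P k} - (if P a then 1 else 0) + (if P b then 1 else 0)"
proof -
  have f: "finite {k \<in> W. P k}" using assms by simp
  have e: "{k \<in> insert b (W - {a}). P k} = (if P b then insert b ({k \<in> W. P k} - {a}) else ({k \<in> W. P k} - {a}))" by auto
  have c1: "card ({k \<in> W. P k} - {a}) = card {k \<in> W. P k} - (if P a then 1 else 0)"
    using f assms(2) by (simp add: card_Diff_singleton_if)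
  have c2: "b \<notin> {k \<in> W. P k} - {a}" using assms(3) by simp
  show ?thesis unfolding e using c1 c2 f by (simp add: card_insert_disjoint)
qed

lemma M_swap:
  assumes "finite W" "a \<in> W" "b \<notin> W" "\<sigma> a \<in> {0,1}" "\<sigma> b \<in> {0,1}" "\<sigma> a \<noteq> M \<sigma> W"
  shows "M \<sigma> (insert b (W - {a})) = M \<sigma> W"
proof -
  define Z where "Z = card {k \<in> W. \<sigma> k = 0}"
  define Ob where "Ob = card {k \<in> W. \<sigma> k = 1}"
  have fz: "finite {k \<in> W. \<sigma> k = 0}" "finite {k \<in> W. \<sigma> k = 1}" using assms(1) by auto
  have z: "\<sigma> a = 0 \<Longrightarrow> Z \<ge> 1" unfolding Z_def
    using card_mono[OF fz(1), of "{a}"] assms(2) by auto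
  have o: "\<sigma> a = 1 \<Longrightarrow> Ob \<ge> 1" unfolding Ob_def
    using card_mono[OF fz(2), of "{a}"] assms(2) by auto
  have Z': "card {k \<in> insert b (W - {a}). \<sigma> k = 0} = Z - (if \<sigma> a = 0 then 1 else 0) + (if \<sigma> b = 0 then 1 else 0)"
    unfolding Z_def by (rule card_swap[OF assms(1-3)])
  have Ob': "card {k \<in> insert b (W - {a}). \<sigma> k = 1} = Ob - (if \<sigma> a = 1 then 1 else 0) + (if \<sigma> b = 1 then 1 else 0)"
    unfolding Ob_def by (rule card_swap[OF assms(1-3)])
  have MW: "M \<sigma> W = (if Z > Ob then 0 else 1)" unfolding M_def Z_def Ob_def by simp
  have MW': "M \<sigma> (insert b (W - {a})) = (if Z - (if \<sigma> a = 0 then 1 else 0) + (if \<sigma> b = 0 then 1 else 0) > Ob - (if \<sigma> a = 1 then 1 else 0) + (if \<sigma> b = 1 then 1 else 0) then 0 else 1)"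
    unfolding M_def Z'[symmetric] Ob'[symmetric] by (rule refl)
  have ab: "(\<sigma> a = 0 \<or> \<sigma> a = 1) \<and> (\<sigma> b = 0 \<or> \<sigma> b = 1)" using assms(4,5) by simp
  show ?thesis
    using ab z o assms(6) unfolding MW' MW
    by (elim conjE disjE) (simp_all split: if_split_asm)
qed

lemma maj_M: "maj n r \<sigma> k = M \<sigma> (cint n (k - int r) (k + int r))"
  unfolding maj_def M_def by simp

lemma maj_mod: assumes "n \<ge> 1" shows "maj n r \<sigma> (k mod n) = maj n r \<sigma> k"
proof -
  have e: "(c - (k mod n - int r)) mod n = (c - (k - int r)) mod n" for c
  proof -
    have "(c - (k mod n - int r)) mod n = ((c + int r) - k mod n) mod n" by (simp add: algebra_simps)
    also have "\<dots> = ((c + int r) - k) mod n" by (rule mod_diff_right_eq)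
    finally show ?thesis by (simp add: algebra_simps)
  qed
  have "cint n (k mod n - int r) (k mod n + int r) = cint n (k - int r) (k + int r)"
  proof -
    have e2: "(k mod n + int r - (k - int r)) mod n = (k + int r - (k - int r)) mod n"
      using e[of "k mod n + int r"] by simp
    show ?thesis unfolding cint_char[OF assms] e e2 by (rule refl)
  qed
  then show ?thesis unfolding maj_M by simp
qed

lemma modm1:
  fixes d n :: int
  assumes "0 \<le> d" "d < n"
  shows "(d - 1) mod n = (if d = 0 then n - 1 else d - 1)"
proof (cases "d = 0")
  case True
  have "n > 0" using assms by simp
  have "(-1::int) mod n = (-1 + n) mod n" by (rule mod_add_self2[symmetric])
  also have "\<dots> = n - 1" using \<open>n > 0\<close> by (subst mod_pos_pos_trivial) auto
  finally have "(-1::int) mod n = n - 1" .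
  then show ?thesis using True by simp
next
  case False
  then show ?thesis using assms by (simp add: mod_pos_pos_trivial)
qed

lemma maj_change:
  assumes n: "n \<ge> 1" and s01: "\<forall>k\<in>cells n. \<sigma> k \<in> {0,1}"
    and ne: "maj n r \<sigma> k \<noteq> maj n r \<sigma> (k+1)"
  shows "\<sigma> ((k - int r) mod n) = maj n r \<sigma> k \<and> \<sigma> ((k + 1 + int r) mod n) = maj n r \<sigma> (k+1)"
proof -
  define W where "W = cint n (k - int r) (k + int r)"
  define W' where "W' = cint n (k + 1 - int r) (k + 1 + int r)"
  define m where "m = (2 * int r) mod n"
  define a where "a = (k - int r) mod n"
  define b where "b = (k + 1 + int r) mod n"
  define d where "d c = (c - (k - int r)) mod n" for c
  have m0: "0 \<le> m" "m < n" unfolding m_def using n by auto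
  have d0: "0 \<le> d c" "d c < n" for c unfolding d_def using n by auto
  have Wc: "c \<in> W \<longleftrightarrow> 0 \<le> c \<and> c < n \<and> d c \<le> m" for c
    unfolding W_def cint_char[OF n] d_def m_def by simp
  have dd: "(c - (k + 1 - int r)) mod n = (d c - 1) mod n" for c
    unfolding d_def by (simp add: mod_diff_left_eq algebra_simps)
  have W'c: "c \<in> W' \<longleftrightarrow> 0 \<le> c \<and> c < n \<and> (d c - 1) mod n \<le> m" for c
  proof -
    have e: "(k + 1 + int r - (k + 1 - int r)) = 2 * int r" by simp
    show ?thesis unfolding W'_def cint_char[OF n] e dd m_def by simp
  qed
  have dc: "0 \<le> c \<Longrightarrow> c < n \<Longrightarrow> c = ((k - int r) + d c) mod n" for c
    unfolding d_def by (simp add: mod_add_right_eq)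
  have "W \<subseteq> {0..<n}" "W' \<subseteq> {0..<n}" using Wc W'c by auto
  then have Wfin: "finite W" "finite W'" by (auto intro: finite_subset)
  have mW: "maj n r \<sigma> k = M \<sigma> W" "maj n r \<sigma> (k+1) = M \<sigma> W'"
    unfolding maj_M W_def W'_def by (simp_all add: algebra_simps)
  have notfull: "m \<noteq> n - 1"
  proof
    assume "m = n - 1"
    have nb: "x mod n < n" for x using n by simp
    have "c \<in> W \<longleftrightarrow> 0 \<le> c \<and> c < n" for c using Wc[of c] d0[of c] \<open>m = n - 1\<close> by auto
    moreover have "c \<in> W' \<longleftrightarrow> 0 \<le> c \<and> c < n" for c using W'c[of c] nb[of "d c - 1"] \<open>m = n - 1\<close> by auto
    ultimately have "W = W'" by blast
    then show False using ne mW by simp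
  qed
  have a_in: "0 \<le> a" "a < n" "d a = 0" unfolding a_def d_def using n by (auto simp: mod_diff_left_eq)
  have da: "c = a" if "0 \<le> c" "c < n" "d c = 0" for c
  proof -
    have h: "c = ((k - int r) + d c) mod n" using dc that by blast
    show ?thesis by (subst h) (simp add: a_def that)
  qed
  have db0: "d b = (m + 1) mod n"
  proof -
    have "d b = (k + 1 + int r - (k - int r)) mod n" unfolding b_def d_def by (rule mod_diff_left_eq)
    also have "\<dots> = (2 * int r + 1) mod n" by (simp add: algebra_simps)
    also have "\<dots> = (m + 1) mod n" unfolding m_def by (rule mod_add_left_eq[symmetric])
    finally show ?thesis .
  qed
  have db: "d b = m + 1" using db0 m0 notfull by (simp add: mod_pos_pos_trivial)
  have b_in: "0 \<le> b" "b < n" unfolding b_def using n by auto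
  have dbb: "0 \<le> c \<Longrightarrow> c < n \<Longrightarrow> d c = m + 1 \<Longrightarrow> c = b" for c
    using dc[of c] dc[of b] b_in db by metis
  have W'eq: "W' = insert b (W - {a})"
  proof (rule set_eqI)
    fix c
    show "c \<in> W' \<longleftrightarrow> c \<in> insert b (W - {a})"
    proof (cases "0 \<le> c \<and> c < n")
      case False then show ?thesis using Wc W'c b_in by auto
    next
      case True
      have "(d c - 1) mod n = (if d c = 0 then n - 1 else d c - 1)" using modm1 d0 by blast
      note eq = this
      show ?thesis
      proof (cases "d c = 0")
        case True
        then have "c = a" using da[of c] \<open>0 \<le> c \<and> c < n\<close> by blast
        moreover have "c \<notin> W'" using W'c[of c] eq True m0 notfull by auto
        moreover have "c \<noteq> b" using True db m0 by auto
        ultimately show ?thesis by blast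
      next
        case False
        then have "c \<noteq> a" using a_in by auto
        have "c = b \<longleftrightarrow> d c = m + 1" using dbb[of c] db \<open>0 \<le> c \<and> c < n\<close> by blast
        moreover have "c \<in> W' \<longleftrightarrow> d c \<le> m + 1" using W'c[of c] eq False \<open>0 \<le> c \<and> c < n\<close> by auto
        moreover have "c \<in> W \<longleftrightarrow> d c \<le> m" using Wc[of c] \<open>0 \<le> c \<and> c < n\<close> by auto
        ultimately show ?thesis using \<open>c \<noteq> a\<close> by auto
      qed
    qed
  qed
  have aW0: "a \<in> W" using Wc[of a] a_in m0 by auto
  have bW0: "b \<notin> W" using Wc[of b] db by auto
  have ab: "a \<noteq> b" using a_in db m0 by auto
  have aW: "a \<in> W" "a \<notin> W'" using aW0 ab unfolding W'eq by auto
  have bW: "b \<notin> W" "b \<in> W'" using bW0 unfolding W'eq by auto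
  have Weq: "W = insert a (W' - {b})" using aW0 bW0 ab unfolding W'eq by auto
  have sa: "\<sigma> a \<in> {0,1}" "\<sigma> b \<in> {0,1}" using s01 a_in b_in unfolding cells_def by auto
  have 1: "\<sigma> a = maj n r \<sigma> k"
  proof (rule ccontr)
    assume "\<sigma> a \<noteq> maj n r \<sigma> k"
    then have "M \<sigma> W' = M \<sigma> W" unfolding W'eq using M_swap[OF Wfin(1) aW(1) bW(1) sa] mW by simp
    then show False using ne mW by simp
  qed
  have 2: "\<sigma> b = maj n r \<sigma> (k+1)"
  proof (rule ccontr)
    assume "\<sigma> b \<noteq> maj n r \<sigma> (k+1)"
    then have "M \<sigma> W = M \<sigma> W'" unfolding Weq using M_swap[OF Wfin(2) bW(2) aW(2) sa(2,1)] mW by simp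
    then show False using ne mW by simp
  qed
  show ?thesis using 1 2 unfolding a_def b_def by blast
qed


definition chg :: "int \<Rightarrow> (int \<Rightarrow> nat) \<Rightarrow> int \<Rightarrow> bool" where
  "chg n \<sigma> k = (\<sigma> ((k - 1) mod n) \<noteq> \<sigma> (k mod n))"

definition bwd :: "int \<Rightarrow> (int \<Rightarrow> nat) \<Rightarrow> int \<Rightarrow> nat" where
  "bwd n \<sigma> c = (LEAST t::nat. chg n \<sigma> (c - int t))"

definition fwd :: "int \<Rightarrow> (int \<Rightarrow> nat) \<Rightarrow> int \<Rightarrow> nat" where
  "fwd n \<sigma> c = (LEAST t::nat. chg n \<sigma> (c + int t + 1))"

definition bc :: "int \<Rightarrow> (int \<Rightarrow> nat) \<Rightarrow> int \<Rightarrow> int \<times> int" where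
  "bc n \<sigma> c = ((c - int (bwd n \<sigma> c)) mod n, (c + int (fwd n \<sigma> c)) mod n)"

lemma cint_mem:
  assumes "n \<ge> 1"
  shows "c \<in> cint n a b \<longleftrightarrow> 0 \<le> c \<and> c < n \<and> (c - a) mod n \<le> (b - a) mod n"
  using cint_char[OF assms] by simp

lemma blocks_iff:
  assumes n: "n \<ge> 1" and s01: "\<forall>k\<in>cells n. \<sigma> k \<in> {0,1}"
  shows "(p, q) \<in> blocks n \<sigma> \<longleftrightarrow> p \<in> cells n \<and> q \<in> cells n \<and> (\<forall>e\<in>cint n p q. \<sigma> e = \<sigma> p)
     \<and> \<sigma> ((p - 1) mod n) \<noteq> \<sigma> p \<and> \<sigma> ((q + 1) mod n) \<noteq> \<sigma> p"
proof
  assume "(p, q) \<in> blocks n \<sigma>"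
  then obtain \<beta> where b: "\<beta> \<in> {0,1}" "(p,q) \<in> blocks_of n \<beta> \<sigma>" unfolding blocks_def by auto
  have pin: "p \<in> cint n p q" using b(2) n unfolding blocks_of_def cells_def cint_mem[OF n] by auto
  show "p \<in> cells n \<and> q \<in> cells n \<and> (\<forall>e\<in>cint n p q. \<sigma> e = \<sigma> p)
     \<and> \<sigma> ((p - 1) mod n) \<noteq> \<sigma> p \<and> \<sigma> ((q + 1) mod n) \<noteq> \<sigma> p"
    using b pin unfolding blocks_of_def by auto
next
  assume h: "p \<in> cells n \<and> q \<in> cells n \<and> (\<forall>e\<in>cint n p q. \<sigma> e = \<sigma> p)
     \<and> \<sigma> ((p - 1) mod n) \<noteq> \<sigma> p \<and> \<sigma> ((q + 1) mod n) \<noteq> \<sigma> p"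
  have c: "(p - 1) mod n \<in> cells n" "(q + 1) mod n \<in> cells n" using n unfolding cells_def by auto
  have v: "\<sigma> p \<in> {0,1}" "\<sigma> ((p - 1) mod n) \<in> {0,1}" "\<sigma> ((q + 1) mod n) \<in> {0,1}"
    using s01 c h by auto
  have "(p, q) \<in> blocks_of n (\<sigma> p) \<sigma>" unfolding blocks_of_def using h v by auto
  then show "(p, q) \<in> blocks n \<sigma>" unfolding blocks_def using v(1) by auto
qed

lemma parity:
  fixes u :: "nat \<Rightarrow> nat"
  assumes u01: "\<forall>t. u t \<in> {0,1}"
  shows "odd (card {t. t \<le> L \<and> (t = 0 \<or> u (t - 1) \<noteq> u t)}) \<longleftrightarrow> u 0 = u L"
proof (induction L)
  case 0
  have "{t. t \<le> (0::nat) \<and> (t = 0 \<or> u (t - 1) \<noteq> u t)} = {0}" by auto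
  then show ?case by simp
next
  case (Suc L)
  have e: "{t. t \<le> Suc L \<and> (t = 0 \<or> u (t - 1) \<noteq> u t)} =
     {t. t \<le> L \<and> (t = 0 \<or> u (t - 1) \<noteq> u t)} \<union> (if u L \<noteq> u (Suc L) then {Suc L} else {})"
    by (auto simp: le_Suc_eq)
  have f: "finite {t. t \<le> L \<and> (t = 0 \<or> u (t - 1) \<noteq> u t)}" by simp
  have nm: "Suc L \<notin> {t. t \<le> L \<and> (t = 0 \<or> u (t - 1) \<noteq> u t)}" by simp
  have v: "u 0 \<in> {0,1}" "u L \<in> {0,1}" "u (Suc L) \<in> {0,1}" using u01 by auto
  show ?case
  proof (cases "u L \<noteq> u (Suc L)")
    case True
    then have "card {t. t \<le> Suc L \<and> (t = 0 \<or> u (t - 1) \<noteq> u t)} = Suc (card {t. t \<le> L \<and> (t = 0 \<or> u (t - 1) \<noteq> u t)})"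
      unfolding e using f nm by simp
    then show ?thesis using Suc True v by auto
  next
    case False
    then show ?thesis unfolding e using Suc by simp
  qed
qed

lemma chg_mod: "n \<ge> 1 \<Longrightarrow> chg n \<sigma> (k mod n) = chg n \<sigma> k"
  unfolding chg_def by (simp add: mod_diff_left_eq)

context
  fixes n :: int and \<sigma> :: "int \<Rightarrow> nat"
  assumes n: "n \<ge> 1" and s01: "\<forall>k\<in>cells n. \<sigma> k \<in> {0,1}"
    and nc: "\<exists>d\<in>cells n. \<exists>e\<in>cells n. \<sigma> d \<noteq> \<sigma> e"
begin

lemma bwd_ex: "\<exists>t::nat. int t < n \<and> chg n \<sigma> (c - int t)"
proof (rule ccontr)
  assume "\<not> ?thesis"
  then have h: "\<And>t::nat. int t < n \<Longrightarrow> \<sigma> ((c - int t - 1) mod n) = \<sigma> ((c - int t) mod n)"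
    unfolding chg_def by auto
  have all: "int t < n \<longrightarrow> \<sigma> ((c - int t) mod n) = \<sigma> (c mod n)" for t :: nat
  proof (induction t)
    case 0 then show ?case by simp
  next
    case (Suc t)
    then show ?case using h[of t] by (simp add: algebra_simps)
  qed
  have "\<sigma> e = \<sigma> (c mod n)" if "e \<in> cells n" for e
  proof -
    define t where "t = nat ((c - e) mod n)"
    have "int t = (c - e) mod n" "int t < n" unfolding t_def using n by auto
    moreover have "(c - (c - e) mod n) mod n = e"
    proof -
      have "(c - (c - e) mod n) mod n = (c - (c - e)) mod n" by (rule mod_diff_right_eq)
      then show ?thesis using that unfolding cells_def by simp
    qed
    ultimately show ?thesis using all[of t] by simp
  qed
  then show False using nc by auto
qed

lemma fwd_ex: "\<exists>t::nat. int t < n \<and> chg n \<sigma> (c + int t + 1)"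
proof (rule ccontr)
  assume "\<not> ?thesis"
  then have h: "\<And>t::nat. int t < n \<Longrightarrow> \<sigma> ((c + int t + 1) mod n) = \<sigma> ((c + int t) mod n)"
    unfolding chg_def by auto
  have all: "int t < n \<longrightarrow> \<sigma> ((c + int t) mod n) = \<sigma> (c mod n)" for t :: nat
  proof (induction t)
    case 0 then show ?case by simp
  next
    case (Suc t)
    then show ?case using h[of t] by (simp add: algebra_simps)
  qed
  have "\<sigma> e = \<sigma> (c mod n)" if "e \<in> cells n" for e
  proof -
    define t where "t = nat ((e - c) mod n)"
    have "int t = (e - c) mod n" "int t < n" unfolding t_def using n by auto
    moreover have "(c + (e - c) mod n) mod n = e"
    proof -
      have "(c + (e - c) mod n) mod n = (c + (e - c)) mod n" by (rule mod_add_right_eq)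
      then show ?thesis using that unfolding cells_def by simp
    qed
    ultimately show ?thesis using all[of t] by simp
  qed
  then show False using nc by auto
qed

lemma bwd_lt: "int (bwd n \<sigma> c) < n"
proof -
  obtain t where t: "int t < n" "chg n \<sigma> (c - int t)" using bwd_ex by blast
  have "bwd n \<sigma> c \<le> t" unfolding bwd_def using t(2) by (rule Least_le)
  then show ?thesis using t(1) by simp
qed

lemma bwd_chg: "chg n \<sigma> (c - int (bwd n \<sigma> c))"
  unfolding bwd_def using bwd_ex by (metis (mono_tags, lifting) LeastI_ex)

lemma bwd_const: "s \<le> bwd n \<sigma> c \<Longrightarrow> \<sigma> ((c - int s) mod n) = \<sigma> (c mod n)"
proof (induction s)
  case 0 then show ?case by simp
next
  case (Suc s)
  then have "s < bwd n \<sigma> c" by simp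
  then have "\<not> chg n \<sigma> (c - int s)" unfolding bwd_def using not_less_Least by blast
  then show ?case using Suc unfolding chg_def by (simp add: algebra_simps)
qed

lemma fwd_lt: "int (fwd n \<sigma> c) < n"
proof -
  obtain t where t: "int t < n" "chg n \<sigma> (c + int t + 1)" using fwd_ex by blast
  have "fwd n \<sigma> c \<le> t" unfolding fwd_def using t(2) by (rule Least_le)
  then show ?thesis using t(1) by simp
qed

lemma fwd_chg: "chg n \<sigma> (c + int (fwd n \<sigma> c) + 1)"
  unfolding fwd_def using fwd_ex by (metis (mono_tags, lifting) LeastI_ex)

lemma fwd_const: "s \<le> fwd n \<sigma> c \<Longrightarrow> \<sigma> ((c + int s) mod n) = \<sigma> (c mod n)"
proof (induction s)
  case 0 then show ?case by simp
next
  case (Suc s)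
  then have "s < fwd n \<sigma> c" by simp
  then have "\<not> chg n \<sigma> (c + int s + 1)" unfolding fwd_def using not_less_Least by blast
  then show ?case using Suc unfolding chg_def by (simp add: algebra_simps)
qed

lemma bwd_fwd_lt: "int (bwd n \<sigma> c) + int (fwd n \<sigma> c) < n"
proof (rule ccontr)
  assume H: "\<not> ?thesis"
  define B where "B = int (bwd n \<sigma> c)"
  define s where "s = nat (n - 1 - B)"
  have Bl: "B < n" "0 \<le> B" unfolding B_def using bwd_lt by auto
  have "s \<le> fwd n \<sigma> c" unfolding s_def B_def using H by simp
  then have 1: "\<sigma> ((c + int s) mod n) = \<sigma> (c mod n)" by (rule fwd_const)
  have "(c + int s) mod n = (c - B - 1 + n) mod n" unfolding s_def using Bl by (simp add: algebra_simps)
  also have "\<dots> = (c - B - 1) mod n" by simp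
  finally have 2: "\<sigma> ((c - B - 1) mod n) = \<sigma> (c mod n)" using 1 by simp
  have 3: "\<sigma> ((c - B) mod n) = \<sigma> (c mod n)" unfolding B_def by (rule bwd_const) simp
  show False using bwd_chg[of c] 2 3 unfolding chg_def B_def by simp
qed

lemma bc_block:
  assumes c: "c \<in> cells n"
  shows "bc n \<sigma> c \<in> blocks n \<sigma> \<and> c \<in> cint n (fst (bc n \<sigma> c)) (snd (bc n \<sigma> c))"
proof -
  define B where "B = int (bwd n \<sigma> c)"
  define F where "F = int (fwd n \<sigma> c)"
  define p where "p = (c - B) mod n"
  define q where "q = (c + F) mod n"
  have BF: "0 \<le> B" "0 \<le> F" "B + F < n" unfolding B_def F_def using bwd_fwd_lt by auto
  have c0: "0 \<le> c" "c < n" "c mod n = c" using c unfolding cells_def by auto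
  have pc: "p \<in> cells n" "q \<in> cells n" unfolding p_def q_def cells_def using n by auto
  have qp: "(q - p) mod n = B + F"
  proof -
    have "(q - p) mod n = (c + F - (c - B)) mod n" unfolding p_def q_def by (rule mod_diff_eq)
    also have "\<dots> = B + F" using BF by (simp add: mod_pos_pos_trivial)
    finally show ?thesis .
  qed
  have sp: "\<sigma> p = \<sigma> c" unfolding p_def B_def using bwd_const[of "bwd n \<sigma> c" c] c0 by simp
  have const: "\<sigma> e = \<sigma> p" if e: "e \<in> cint n p q" for e
  proof -
    define ofs where "ofs = (e - p) mod n"
    have o0: "0 \<le> ofs" "ofs \<le> B + F" using e n unfolding ofs_def cint_mem[OF n] qp by auto
    have ee: "e = (p + ofs) mod n"
    proof -
      have "(p + ofs) mod n = (p + (e - p)) mod n" unfolding ofs_def by (rule mod_add_right_eq)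
      then show ?thesis using e unfolding cint_mem[OF n] by simp
    qed
    also have "\<dots> = (c - B + ofs) mod n" unfolding p_def by (rule mod_add_left_eq)
    finally have ee2: "e = (c - B + ofs) mod n" .
    show ?thesis
    proof (cases "ofs \<le> B")
      case True
      have "e = (c - int (nat (B - ofs))) mod n" using ee2 True by (simp add: algebra_simps)
      moreover have "nat (B - ofs) \<le> bwd n \<sigma> c" unfolding B_def using o0 by simp
      ultimately show ?thesis using bwd_const[of "nat (B - ofs)" c] sp c0 by simp
    next
      case False
      have "e = (c + int (nat (ofs - B))) mod n" using ee2 False by (simp add: algebra_simps)
      moreover have "nat (ofs - B) \<le> fwd n \<sigma> c" unfolding F_def using o0 False BF
        by (simp add: F_def B_def)
      ultimately show ?thesis using fwd_const[of "nat (ofs - B)" c] sp c0 by simp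
    qed
  qed
  have l: "\<sigma> ((p - 1) mod n) \<noteq> \<sigma> p"
  proof -
    have "(p - 1) mod n = (c - B - 1) mod n" unfolding p_def by (rule mod_diff_left_eq)
    then show ?thesis using bwd_chg[of c] unfolding chg_def p_def B_def by simp
  qed
  have sq: "\<sigma> q = \<sigma> c" unfolding q_def F_def using fwd_const[of "fwd n \<sigma> c" c] c0 by simp
  have r: "\<sigma> ((q + 1) mod n) \<noteq> \<sigma> p"
  proof -
    have "(q + 1) mod n = (c + F + 1) mod n" unfolding q_def by (rule mod_add_left_eq)
    then show ?thesis using fwd_chg[of c] sq sp unfolding chg_def q_def F_def by simp
  qed
  have "(p, q) \<in> blocks n \<sigma>" unfolding blocks_iff[OF n s01] using pc const l r by blast
  moreover have "c \<in> cint n p q"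
  proof -
    have "(c - p) mod n = (c - (c - B)) mod n" unfolding p_def by (rule mod_diff_right_eq)
    then have "(c - p) mod n = B" using BF by (simp add: mod_pos_pos_trivial)
    then show ?thesis unfolding cint_mem[OF n] qp using c0 BF by simp
  qed
  moreover have "bc n \<sigma> c = (p, q)" unfolding bc_def p_def q_def B_def F_def by simp
  ultimately show ?thesis by simp
qed

lemma bc_unique:
  assumes Y: "(p, q) \<in> blocks n \<sigma>" and c: "c \<in> cint n p q"
  shows "bc n \<sigma> c = (p, q)"
proof -
  have pq: "p \<in> cells n" "q \<in> cells n" and const: "\<forall>e\<in>cint n p q. \<sigma> e = \<sigma> p"
    and l: "\<sigma> ((p - 1) mod n) \<noteq> \<sigma> p" and r: "\<sigma> ((q + 1) mod n) \<noteq> \<sigma> p"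
    using Y unfolding blocks_iff[OF n s01] by auto
  define F0 where "F0 = (q - p) mod n"
  define ofs where "ofs = (c - p) mod n"
  have c0: "0 \<le> c" "c < n" "ofs \<le> F0" using c unfolding cint_mem[OF n] ofs_def F0_def by auto
  have F00: "0 \<le> ofs" "F0 < n" unfolding ofs_def F0_def using n by auto
  have cc: "c = (p + ofs) mod n"
  proof -
    have "(p + ofs) mod n = (p + (c - p)) mod n" unfolding ofs_def by (rule mod_add_right_eq)
    then show ?thesis using c0 by simp
  qed
  have shift: "(c + x) mod n = (p + (ofs + x)) mod n" for x
  proof -
    have "(c + x) mod n = ((p + ofs) mod n + x) mod n" using cc by simp
    also have "\<dots> = (p + ofs + x) mod n" by (rule mod_add_left_eq)
    finally show ?thesis by (simp add: algebra_simps)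
  qed
  have inb: "\<sigma> ((p + s) mod n) = \<sigma> p" if "0 \<le> s" "s \<le> F0" for s
  proof -
    have "((p + s) mod n - p) mod n = s" using that F00 by (intro mod_off) auto
    then have "(p + s) mod n \<in> cint n p q" unfolding cint_mem[OF n] using that n F0_def by simp
    then show ?thesis using const by blast
  qed
  have qq: "(p + F0) mod n = q"
  proof -
    have "(p + F0) mod n = (p + (q - p)) mod n" unfolding F0_def by (rule mod_add_right_eq)
    then show ?thesis using pq unfolding cells_def by simp
  qed
  have sq: "\<sigma> q = \<sigma> p" using inb[of F0] qq F00 c0 by simp
  have b: "bwd n \<sigma> c = nat ofs"
    unfolding bwd_def
  proof (rule Least_equality)
    have "(c - int (nat ofs)) mod n = p"
      using shift[of "- ofs"] F00 pq unfolding cells_def by (simp add: algebra_simps)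
    moreover have "(c - int (nat ofs) - 1) mod n = (p - 1) mod n"
      using shift[of "- ofs - 1"] F00 by (simp add: algebra_simps)
    ultimately show "chg n \<sigma> (c - int (nat ofs))" unfolding chg_def using l by simp
  next
    fix y assume h: "chg n \<sigma> (c - int y)"
    show "nat ofs \<le> y"
    proof (rule ccontr)
      assume "\<not> nat ofs \<le> y"
      then have y: "int y < ofs" by simp
      have "(c - int y) mod n = (p + (ofs - int y)) mod n" using shift[of "- int y"] by (simp add: algebra_simps)
      moreover have "(c - int y - 1) mod n = (p + (ofs - int y - 1)) mod n"
        using shift[of "- int y - 1"] by (simp add: algebra_simps)
      ultimately show False using h inb[of "ofs - int y"] inb[of "ofs - int y - 1"] y c0
        unfolding chg_def by simp
    qed
  qed
  have f: "fwd n \<sigma> c = nat (F0 - ofs)"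
    unfolding fwd_def
  proof (rule Least_equality)
    have 1: "(c + int (nat (F0 - ofs))) mod n = q"
      using shift[of "F0 - ofs"] c0 qq by (simp add: algebra_simps)
    have "(c + int (nat (F0 - ofs)) + 1) mod n = (p + F0 + 1) mod n"
      using shift[of "F0 - ofs + 1"] c0 by (simp add: algebra_simps)
    also have "\<dots> = ((p + F0) mod n + 1) mod n" by (rule mod_add_left_eq[symmetric])
    finally have 2: "(c + int (nat (F0 - ofs)) + 1) mod n = (q + 1) mod n" using qq by simp
    have 3: "(c + int (nat (F0 - ofs)) + 1 - 1) = c + int (nat (F0 - ofs))" by simp
    show "chg n \<sigma> (c + int (nat (F0 - ofs)) + 1)" unfolding chg_def 3 1 2 using r sq by simp
  next
    fix y assume h: "chg n \<sigma> (c + int y + 1)"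
    show "nat (F0 - ofs) \<le> y"
    proof (rule ccontr)
      assume "\<not> nat (F0 - ofs) \<le> y"
      then have y: "int y < F0 - ofs" by simp
      have "(c + int y) mod n = (p + (ofs + int y)) mod n" using shift[of "int y"] by simp
      moreover have "(c + int y + 1) mod n = (p + (ofs + int y + 1)) mod n"
        using shift[of "int y + 1"] by (simp add: algebra_simps)
      ultimately show False using h inb[of "ofs + int y"] inb[of "ofs + int y + 1"] y F00
        unfolding chg_def by simp
    qed
  qed
  have "(c - ofs) mod n = p"
    using shift[of "- ofs"] F00 pq unfolding cells_def by (simp add: algebra_simps)
  moreover have "(c + (F0 - ofs)) mod n = q"
    using shift[of "F0 - ofs"] qq by (simp add: algebra_simps)
  ultimately show ?thesis unfolding bc_def b f using F00 c0 by simp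
qed

lemma block_containing_eq: "block_containing n \<sigma> c = bc n \<sigma> (c mod n)"
proof -
  have cm: "c mod n \<in> cells n" unfolding cells_def using n by auto
  show ?thesis unfolding block_containing_def
  proof (rule the_equality)
    show "bc n \<sigma> (c mod n) \<in> blocks n \<sigma> \<and> c mod n \<in> cint n (fst (bc n \<sigma> (c mod n))) (snd (bc n \<sigma> (c mod n)))"
      by (rule bc_block[OF cm])
  next
    fix X assume "X \<in> blocks n \<sigma> \<and> c mod n \<in> cint n (fst X) (snd X)"
    then show "X = bc n \<sigma> (c mod n)" using bc_unique[of "fst X" "snd X" "c mod n"] by simp
  qed
qed

lemma count_odd:
  assumes x: "x \<in> cells n" and y: "y \<in> cells n" and cx: "chg n \<sigma> x"
    and cy: "\<sigma> ((y + 1) mod n) \<noteq> \<sigma> y" and eq: "\<sigma> x = \<sigma> y"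
  shows "odd (card {Y \<in> blocks n \<sigma>. cint n (fst Y) (snd Y) \<subseteq> cint n x y})"
proof -
  define S where "S = {Y \<in> blocks n \<sigma>. cint n (fst Y) (snd Y) \<subseteq> cint n x y}"
  define L where "L = (y - x) mod n"
  define T where "T = {p. 0 \<le> p \<and> p < n \<and> chg n \<sigma> p \<and> (p - x) mod n \<le> L}"
  define N where "N = {t::nat. int t \<le> L \<and> chg n \<sigma> (x + int t)}"
  have L0: "0 \<le> L" "L < n" unfolding L_def using n by auto
  have x0: "0 \<le> x" "x < n" "x mod n = x" using x unfolding cells_def by auto
  have y0: "0 \<le> y" "y < n" "y mod n = y" using y unfolding cells_def by auto
  have yy: "(x + L) mod n = y"
  proof -
    have "(x + L) mod n = (x + (y - x)) mod n" unfolding L_def by (rule mod_add_right_eq)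
    then show ?thesis using y0 by simp
  qed
  have selfin: "p \<in> cint n p q" if "p \<in> cells n" for p q using that n unfolding cint_mem[OF n] cells_def by simp
  have inj: "inj_on fst S"
  proof (rule inj_onI)
    fix Y1 Y2 assume h: "Y1 \<in> S" "Y2 \<in> S" "fst Y1 = fst Y2"
    have Yb: "Y1 \<in> blocks n \<sigma>" "Y2 \<in> blocks n \<sigma>" using h(1,2) unfolding S_def by auto
    have c1: "fst Y1 \<in> cells n" "fst Y2 \<in> cells n"
      using Yb blocks_iff[OF n s01, of "fst Y1" "snd Y1"] blocks_iff[OF n s01, of "fst Y2" "snd Y2"] by auto
    have "bc n \<sigma> (fst Y1) = (fst Y1, snd Y1)"
      by (rule bc_unique) (use Yb(1) selfin[OF c1(1)] in auto)
    moreover have "bc n \<sigma> (fst Y2) = (fst Y2, snd Y2)"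
      by (rule bc_unique) (use Yb(2) selfin[OF c1(2)] in auto)
    ultimately show "Y1 = Y2" using h(3) by (metis prod.collapse)
  qed
  have img: "fst ` S = T"
  proof
    show "fst ` S \<subseteq> T"
    proof
      fix p assume "p \<in> fst ` S"
      then obtain q where pq: "(p, q) \<in> blocks n \<sigma>" "cint n p q \<subseteq> cint n x y" unfolding S_def by force
      have p: "p \<in> cells n" "\<sigma> ((p - 1) mod n) \<noteq> \<sigma> p" using pq(1) unfolding blocks_iff[OF n s01] by auto
      have "p \<in> cint n x y" using selfin[OF p(1)] pq(2) by blast
      then have "(p - x) mod n \<le> L" unfolding cint_mem[OF n] L_def by simp
      moreover have p01: "0 \<le> p" "p < n" using p(1) unfolding cells_def by auto
      moreover have "chg n \<sigma> p" unfolding chg_def using p(2) p01 by simp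
      ultimately show "p \<in> T" unfolding T_def by simp
    qed
  next
    show "T \<subseteq> fst ` S"
    proof
      fix p assume pT: "p \<in> T"
      have p0: "0 \<le> p" "p < n" "p mod n = p" "chg n \<sigma> p" "(p - x) mod n \<le> L" using pT unfolding T_def by auto
      have pc: "p \<in> cells n" using p0 unfolding cells_def by simp
      have b0: "bwd n \<sigma> p = 0" unfolding bwd_def using p0(4) by (intro Least_equality) auto
      define F where "F = int (fwd n \<sigma> p)"
      define q where "q = (p + F) mod n"
      have bcp: "bc n \<sigma> p = (p, q)" unfolding bc_def b0 q_def F_def using p0 by simp
      have blk: "(p, q) \<in> blocks n \<sigma>" using bc_block[OF pc] bcp by simp
      define ofs where "ofs = (p - x) mod n"
      have ofs0: "0 \<le> ofs" "ofs \<le> L" unfolding ofs_def using p0 n by auto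
      have pe: "p = (x + ofs) mod n"
      proof -
        have "(x + ofs) mod n = (x + (p - x)) mod n" unfolding ofs_def by (rule mod_add_right_eq)
        then show ?thesis using p0 by simp
      qed
      have pk: "(p + z) mod n = (x + ofs + z) mod n" for z
      proof -
        have "(p + z) mod n = ((x + ofs) mod n + z) mod n" using pe by simp
        also have "\<dots> = (x + ofs + z) mod n" by (rule mod_add_left_eq)
        finally show ?thesis .
      qed
      have Fle: "F \<le> L - ofs"
      proof -
        have a1: "(p + int (nat (L - ofs)) + 1 - 1) mod n = y"
          using pk[of "L - ofs"] ofs0 yy by (simp add: algebra_simps)
        have "(p + int (nat (L - ofs)) + 1) mod n = (x + L + 1) mod n"
          using pk[of "L - ofs + 1"] ofs0 by (simp add: algebra_simps)
        also have "\<dots> = ((x + L) mod n + 1) mod n" by (rule mod_add_left_eq[symmetric])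
        finally have a2: "(p + int (nat (L - ofs)) + 1) mod n = (y + 1) mod n" using yy by simp
        have "chg n \<sigma> (p + int (nat (L - ofs)) + 1)" unfolding chg_def a1 a2 using cy by simp
        then have "fwd n \<sigma> p \<le> nat (L - ofs)" unfolding fwd_def by (rule Least_le)
        then show ?thesis unfolding F_def using ofs0 by simp
      qed
      have F0: "0 \<le> F" "F < n" unfolding F_def using fwd_lt by auto
      have qp: "(q - p) mod n = F" unfolding q_def using F0 by (intro mod_off) auto
      have "cint n p q \<subseteq> cint n x y"
      proof
        fix e assume e: "e \<in> cint n p q"
        then have e0: "0 \<le> e" "e < n" "(e - p) mod n \<le> F" unfolding cint_mem[OF n] qp by auto
        have "(e - x) mod n = ((e - p) + (p - x)) mod n" by simp
        also have "\<dots> = ((e - p) mod n + ofs) mod n" unfolding ofs_def by (rule mod_add_eq[symmetric])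
        also have "\<dots> = (e - p) mod n + ofs"
          using e0 ofs0 Fle L0 n by (intro mod_pos_pos_trivial) auto
        finally have "(e - x) mod n \<le> L" using e0 Fle by simp
        then show "e \<in> cint n x y" unfolding cint_mem[OF n] L_def using e0 by simp
      qed
      then have "(p, q) \<in> S" unfolding S_def using blk by simp
      then show "p \<in> fst ` S" by force
    qed
  qed
  have TN: "T = (\<lambda>t. (x + int t) mod n) ` N"
  proof
    show "T \<subseteq> (\<lambda>t. (x + int t) mod n) ` N"
    proof
      fix p assume "p \<in> T"
      then have p0: "0 \<le> p" "p < n" "chg n \<sigma> p" "(p - x) mod n \<le> L" unfolding T_def by auto
      define t where "t = nat ((p - x) mod n)"
      have ti: "int t = (p - x) mod n" unfolding t_def using n by simp
      have pe: "(x + int t) mod n = p"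
      proof -
        have "(x + int t) mod n = (x + (p - x)) mod n" unfolding ti by (rule mod_add_right_eq)
        then show ?thesis using p0 by simp
      qed
      have "chg n \<sigma> (x + int t)" using chg_mod[OF n, of \<sigma> "x + int t"] pe p0 by simp
      then have "t \<in> N" unfolding N_def using ti p0 by simp
      then show "p \<in> (\<lambda>t. (x + int t) mod n) ` N" using pe by force
    qed
  next
    show "(\<lambda>t. (x + int t) mod n) ` N \<subseteq> T"
    proof
      fix p assume "p \<in> (\<lambda>t. (x + int t) mod n) ` N"
      then obtain t where t: "t \<in> N" "p = (x + int t) mod n" by blast
      have t0: "int t \<le> L" "chg n \<sigma> (x + int t)" using t(1) unfolding N_def by auto
      have "(p - x) mod n = int t" unfolding t(2) using t0 L0 by (intro mod_off) auto
      moreover have "chg n \<sigma> p" unfolding t(2) using chg_mod[OF n] t0 by simp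
      ultimately show "p \<in> T" unfolding T_def t(2) using t0 n by simp
    qed
  qed
  have injN: "inj_on (\<lambda>t. (x + int t) mod n) N"
  proof (rule inj_onI)
    fix t1 t2 assume h: "t1 \<in> N" "t2 \<in> N" "(x + int t1) mod n = (x + int t2) mod n"
    have "int t1 \<le> L" "int t2 \<le> L" using h(1,2) unfolding N_def by auto
    then have "int t1 < n" "int t2 < n" using L0 by auto
    have "((x + int t1) mod n - x) mod n = int t1" using \<open>int t1 < n\<close> by (intro mod_off) auto
    moreover have "((x + int t2) mod n - x) mod n = int t2" using \<open>int t2 < n\<close> by (intro mod_off) auto
    ultimately have "int t1 = int t2" using h(3) by metis
    then show "t1 = t2" by simp
  qed
  define u where "u t = \<sigma> ((x + int t) mod n)" for t
  have u01: "\<forall>t. u t \<in> {0,1}"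
  proof
    fix t
    have "(x + int t) mod n \<in> cells n" using n unfolding cells_def by simp
    then show "u t \<in> {0,1}" unfolding u_def using s01 by blast
  qed
  have NE: "N = {t. t \<le> nat L \<and> (t = 0 \<or> u (t - 1) \<noteq> u t)}"
  proof (rule set_eqI)
    fix t
    show "t \<in> N \<longleftrightarrow> t \<in> {t. t \<le> nat L \<and> (t = 0 \<or> u (t - 1) \<noteq> u t)}"
    proof (cases t)
      case 0 then show ?thesis unfolding N_def using cx L0 by simp
    next
      case (Suc t')
      have "chg n \<sigma> (x + int t) \<longleftrightarrow> u (t - 1) \<noteq> u t" unfolding chg_def u_def Suc by (simp add: algebra_simps)
      then show ?thesis unfolding N_def using Suc L0 by auto
    qed
  qed
  have uL: "u 0 = u (nat L)" unfolding u_def using yy x0 eq L0 by simp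
  have "odd (card N)" unfolding NE using parity[OF u01] uL by simp
  then have "odd (card T)" unfolding TN using card_image[OF injN] by simp
  then show ?thesis unfolding S_def[symmetric] img[symmetric] using card_image[OF inj] by simp
qed

end


theorem claim8:
  fixes n :: int and r :: nat and \<sigma> \<sigma>' :: "int \<Rightarrow> nat" and i j :: int
  assumes "r \<ge> 1" and "n \<ge> 1"
    and "\<forall>k \<in> cells n. \<sigma> k \<in> {0, 1}"
    and "\<forall>k \<in> cells n. \<sigma>' k \<in> {0, 1}"
    and "\<forall>k \<in> cells n. maj n r \<sigma> k = \<sigma>' k"
    and "(i, j) \<in> blocks n \<sigma>'"
  shows "odd (card (block_interval n (left_map n r \<sigma> (i, j)) (right_map n r \<sigma> (i, j)) (blocks n \<sigma>)))"
proof -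
  note n = assms(2) and s01 = assms(3) and majeq = assms(5)
  have ij: "i \<in> cells n" "j \<in> cells n" "\<forall>e\<in>cint n i j. \<sigma>' e = \<sigma>' i"
    "\<sigma>' ((i - 1) mod n) \<noteq> \<sigma>' i" "\<sigma>' ((j + 1) mod n) \<noteq> \<sigma>' i"
    using assms(6) unfolding blocks_iff[OF n assms(4)] by auto
  define \<beta> where "\<beta> = \<sigma>' i"
  have jin: "j \<in> cint n i j" using ij(2) n unfolding cint_mem[OF n] cells_def by simp
  have sj: "\<sigma>' j = \<beta>" using ij(3) jin unfolding \<beta>_def by blast
  have cm: "k mod n \<in> cells n" for k using n unfolding cells_def by simp
  have mj: "maj n r \<sigma> j = \<beta>" using majeq ij(2) sj by simp
  have mj1: "maj n r \<sigma> (j + 1) \<noteq> \<beta>"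
    using majeq cm[of "j+1"] ij(5) maj_mod[OF n, of r \<sigma> "j+1"] unfolding \<beta>_def by simp
  have mi: "maj n r \<sigma> (i - 1 + 1) = \<beta>" using majeq ij(1) unfolding \<beta>_def by simp
  have mi1: "maj n r \<sigma> (i - 1) \<noteq> \<beta>"
    using majeq cm[of "i - 1"] ij(4) maj_mod[OF n, of r \<sigma> "i - 1"] unfolding \<beta>_def by simp
  have A: "\<sigma> ((j - int r) mod n) = \<beta>" "\<sigma> ((j + 1 + int r) mod n) \<noteq> \<beta>"
    using maj_change[OF n s01, of r j] mj mj1 by auto
  have B0: "\<sigma> ((i - 1 + 1 + int r) mod n) = \<beta>"
    using maj_change[OF n s01, of r "i - 1"] mi mi1 by auto
  then have B: "\<sigma> ((i + int r) mod n) = \<beta>" by simp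
  have nc: "\<exists>d\<in>cells n. \<exists>e\<in>cells n. \<sigma> d \<noteq> \<sigma> e"
    using A cm[of "j - int r"] cm[of "j + 1 + int r"] by metis
  define a where "a = (j - int r) mod n"
  define b where "b = (i + int r) mod n"
  have lm: "left_map n r \<sigma> (i, j) = bc n \<sigma> a"
    unfolding left_map_def a_def using block_containing_eq[OF n s01 nc] by simp
  have rm: "right_map n r \<sigma> (i, j) = bc n \<sigma> b"
    unfolding right_map_def b_def using block_containing_eq[OF n s01 nc] by simp
  obtain x y1 where X: "bc n \<sigma> a = (x, y1)" by (cases "bc n \<sigma> a") auto
  obtain x2 y where Y: "bc n \<sigma> b = (x2, y)" by (cases "bc n \<sigma> b") auto
  have Xb: "(x, y1) \<in> blocks n \<sigma>" "a \<in> cint n x y1" using bc_block[OF n s01 nc cm[of "j - int r"]] X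
    unfolding a_def by auto
  have Yb: "(x2, y) \<in> blocks n \<sigma>" "b \<in> cint n x2 y" using bc_block[OF n s01 nc cm[of "i + int r"]] Y
    unfolding b_def by auto
  have Xp: "x \<in> cells n" "y1 \<in> cells n" "\<forall>e\<in>cint n x y1. \<sigma> e = \<sigma> x" "\<sigma> ((x - 1) mod n) \<noteq> \<sigma> x"
    using Xb(1) unfolding blocks_iff[OF n s01] by auto
  have Yp: "x2 \<in> cells n" "y \<in> cells n" "\<forall>e\<in>cint n x2 y. \<sigma> e = \<sigma> x2" "\<sigma> ((y + 1) mod n) \<noteq> \<sigma> x2"
    using Yb(1) unfolding blocks_iff[OF n s01] by auto
  have yin: "y \<in> cint n x2 y" using Yp(2) n unfolding cint_mem[OF n] cells_def by simp
  have sx: "\<sigma> x = \<beta>" using Xp(3) Xb(2) A(1) unfolding a_def by force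
  have sx2: "\<sigma> x2 = \<beta>" using Yp(3) Yb(2) B unfolding b_def by force
  have sy: "\<sigma> y = \<beta>" using Yp(3) yin sx2 by force
  have cx: "chg n \<sigma> x" unfolding chg_def using Xp(1,4) unfolding cells_def by simp
  have cy: "\<sigma> ((y + 1) mod n) \<noteq> \<sigma> y" using Yp(4) sx2 sy by simp
  have "odd (card {Y \<in> blocks n \<sigma>. cint n (fst Y) (snd Y) \<subseteq> cint n x y})"
    using count_odd[OF n s01 nc Xp(1) Yp(2) cx cy] sx sy by simp
  then show ?thesis unfolding lm rm X Y block_interval_def by simp
qed

end
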